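(* Suppose that $f$ is a non-negative $C^2$ function on $[-2\ell,2\ell]\subset\mathbb{R}$ satisfying $f''\ge f-a$ for some constant $a>0$. If $\max_{[-\ell,\ell]}f\ge2a$, then $\int_{-2\ell}^{2\ell}f\ge2\sqrt2\,a\sinh(\ell/\sqrt2)$.
   Context: $\ell>0$. *)

theory Defs
  imports "HOL-Analysis.Analysis"
begin

end

theory Submission
  imports Defs
begin

lemma mono_within:
  fixes g g' :: "real \<Rightarrow> real"
  assumes d: "\<And>x. x \<in> {a..b} \<Longrightarrow> (g has_real_derivative g' x) (at x within {a..b})"
    and nn: "\<And>x. x \<in> {a..b} \<Longrightarrow> g' x \<ge> 0" and h: "a \<le> x" "x \<le> y" "y \<le> b"
  shows "g x \<le> g y"
proof -
  have c: "continuous_on {a..b} g" by (rule DERIV_continuous_on) (use d in blast)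
  show ?thesis
  proof (rule DERIV_nonneg_imp_increasing_open[OF h(2)])
    fix t assume t: "x < t" "t < y"
    then have "at t within {a..b} = at t" using h by (intro at_within_Icc_at) auto
    then show "\<exists>z. DERIV g t :> z \<and> z \<ge> 0" using d[of t] nn[of t] t h by auto
  next
    show "continuous_on {x..y} g" using c by (rule continuous_on_subset) (use h in auto)
  qed
qed

lemma shift_p:
  fixes g g' :: "real \<Rightarrow> real"
  assumes d: "\<And>x. x \<in> S \<Longrightarrow> (g has_real_derivative g' x) (at x within S)"
    and sub: "(\<lambda>t. c + t) ` T \<subseteq> S" and t: "t \<in> T"
  shows "((\<lambda>t. g (c + t)) has_real_derivative g' (c+t)) (at t within T)"
proof -
  have "c + t \<in> S" using sub t by blast
  then have h1: "(g has_real_derivative g' (c+t)) (at (c+t) within ((\<lambda>t. c+t) ` T))"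
    by (rule DERIV_subset[OF d sub])
  have h2: "((\<lambda>t. c+t) has_real_derivative 1) (at t within T)"
    using DERIV_add[OF DERIV_const DERIV_ident, of c t T] by simp
  have "((g \<circ> (\<lambda>t. c+t)) has_real_derivative g' (c+t) * 1) (at t within T)"
    by (rule DERIV_image_chain[OF h1 h2])
  then show ?thesis by (simp add: o_def)
qed

lemma shift_m:
  fixes g g' :: "real \<Rightarrow> real"
  assumes d: "\<And>x. x \<in> S \<Longrightarrow> (g has_real_derivative g' x) (at x within S)"
    and sub: "(\<lambda>t. c - t) ` T \<subseteq> S" and t: "t \<in> T"
  shows "((\<lambda>t. g (c - t)) has_real_derivative - g' (c-t)) (at t within T)"
proof -
  have "c - t \<in> S" using sub t by blast
  then have h1: "(g has_real_derivative g' (c-t)) (at (c-t) within ((\<lambda>t. c-t) ` T))"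
    by (rule DERIV_subset[OF d sub])
  have h2: "((\<lambda>t. c-t) has_real_derivative -1) (at t within T)"
    using DERIV_diff[OF DERIV_const DERIV_ident, of c t T] by simp
  have "((g \<circ> (\<lambda>t. c-t)) has_real_derivative g' (c-t) * -1) (at t within T)"
    by (rule DERIV_image_chain[OF h1 h2])
  then show ?thesis by (simp add: o_def)
qed

theorem lemmaB4:
  fixes f f' f'' :: "real \<Rightarrow> real" and l a :: real
  assumes l_pos: "l > 0"
    and a_pos: "a > 0"
    and d1: "\<And>x. x \<in> {-2*l..2*l} \<Longrightarrow> (f has_real_derivative f' x) (at x within {-2*l..2*l})"
    and d2: "\<And>x. x \<in> {-2*l..2*l} \<Longrightarrow> (f' has_real_derivative f'' x) (at x within {-2*l..2*l})"
    and cont2: "continuous_on {-2*l..2*l} f''"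
    and nonneg: "\<And>x. x \<in> {-2*l..2*l} \<Longrightarrow> f x \<ge> 0"
    and ineq: "\<And>x. x \<in> {-2*l..2*l} \<Longrightarrow> f'' x \<ge> f x - a"
    and maxbig: "(SUP x\<in>{-l..l}. f x) \<ge> 2*a"
  shows "integral {-2*l..2*l} f \<ge> 2 * sqrt 2 * a * sinh (l / sqrt 2)"
proof -
  let ?I = "{-2*l..2*l}"
  have cf: "continuous_on ?I f" by (rule DERIV_continuous_on) (use d1 in blast)
  have "continuous_on {-l..l} f" using cf by (rule continuous_on_subset) (use l_pos in auto)
  then obtain x0 where x0: "x0 \<in> {-l..l}" "\<And>y. y \<in> {-l..l} \<Longrightarrow> f y \<le> f x0"
    using continuous_attains_sup[of "{-l..l}" f] l_pos by fastforce
  have "(SUP x\<in>{-l..l}. f x) = f x0" by (rule cSup_eq_maximum) (use x0 in auto)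
  with maxbig have fx0: "f x0 \<ge> 2*a" by simp
  have subp: "(\<lambda>t. x0 + t) ` {0..l} \<subseteq> ?I" using x0 by auto
  have subm: "(\<lambda>t. x0 - t) ` {0..l} \<subseteq> ?I" using x0 by auto
  define u where "u t = f (x0 + t) + f (x0 - t) - 2*a" for t
  define u' where "u' t = f' (x0 + t) - f' (x0 - t)" for t
  define u'' where "u'' t = f'' (x0 + t) + f'' (x0 - t)" for t
  have hu: "(u has_real_derivative u' t) (at t within {0..l})" if "t \<in> {0..l}" for t
  proof -
    have "((\<lambda>t. f (x0 + t) + f (x0 - t) - 2*a) has_real_derivative (f' (x0 + t) + - f' (x0 - t) - 0)) (at t within {0..l})"
      by (rule DERIV_diff[OF DERIV_add[OF shift_p[OF d1 subp that] shift_m[OF d1 subm that]] DERIV_const])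
    then show ?thesis unfolding u_def[abs_def] u'_def by simp
  qed
  have hu': "(u' has_real_derivative u'' t) (at t within {0..l})" if "t \<in> {0..l}" for t
  proof -
    have "((\<lambda>t. f' (x0 + t) - f' (x0 - t)) has_real_derivative (f'' (x0 + t) - - f'' (x0 - t))) (at t within {0..l})"
      by (rule DERIV_diff[OF shift_p[OF d2 subp that] shift_m[OF d2 subm that]])
    then show ?thesis unfolding u'_def[abs_def] u''_def by simp
  qed
  have uu: "u'' t - u t \<ge> 0" if "t \<in> {0..l}" for t
    using ineq[of "x0+t"] ineq[of "x0-t"] that x0 unfolding u_def u''_def by auto
  define c where "c = u 0"
  have c2a: "c \<ge> 2*a" using fx0 unfolding c_def u_def by simp
  define p where "p t = exp (-t) * (u' t + u t - c * (sinh t + cosh t))" for t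
  have hp: "(p has_real_derivative exp (-t) * (u'' t - u t)) (at t within {0..l})"
    if "t \<in> {0..l}" for t
  proof -
    have e: "((\<lambda>t. exp (-t)) has_real_derivative exp (-t) * -1) (at t within {0..l})"
      by (rule DERIV_chain2[OF DERIV_exp DERIV_minus[OF DERIV_ident]])
    have sc: "((\<lambda>t. sinh t + cosh t) has_real_derivative cosh t * 1 + sinh t * 1) (at t within {0..l})"
      by (rule DERIV_add[OF has_field_derivative_sinh[OF DERIV_ident] has_field_derivative_cosh[OF DERIV_ident]])
    have g: "((\<lambda>t. u' t + u t - c * (sinh t + cosh t)) has_real_derivative
        (u'' t + u' t - c * (cosh t * 1 + sinh t * 1))) (at t within {0..l})"
      by (rule DERIV_diff[OF DERIV_add[OF hu'[OF that] hu[OF that]] DERIV_cmult[OF sc]])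
    have "(p has_real_derivative exp (-t) * -1 * (u' t + u t - c * (sinh t + cosh t)) +
        (u'' t + u' t - c * (cosh t * 1 + sinh t * 1)) * exp (-t)) (at t within {0..l})"
      unfolding p_def[abs_def] by (rule DERIV_mult[OF e g])
    then show ?thesis by (rule DERIV_cong) (simp add: algebra_simps)
  qed
  have p0: "p 0 = 0" unfolding p_def c_def u'_def by simp
  have pnn: "p t \<ge> 0" if "t \<in> {0..l}" for t
  proof -
    have "p 0 \<le> p t" by (rule mono_within[OF hp]) (use uu that in auto)
    then show ?thesis using p0 by simp
  qed
  define q where "q t = exp t * (u t - c * cosh t)" for t
  have hq: "(q has_real_derivative exp t * (u' t + u t - c * (sinh t + cosh t))) (at t within {0..l})"
    if "t \<in> {0..l}" for t
  proof -
    have e: "((\<lambda>t. exp t) has_real_derivative exp t * 1) (at t within {0..l})"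
      by (rule DERIV_chain2[OF DERIV_exp DERIV_ident])
    have g: "((\<lambda>t. u t - c * cosh t) has_real_derivative (u' t - c * (sinh t * 1))) (at t within {0..l})"
      by (rule DERIV_diff[OF hu[OF that] DERIV_cmult[OF has_field_derivative_cosh[OF DERIV_ident]]])
    have "(q has_real_derivative exp t * 1 * (u t - c * cosh t) + (u' t - c * (sinh t * 1)) * exp t)
        (at t within {0..l})"
      unfolding q_def[abs_def] by (rule DERIV_mult[OF e g])
    then show ?thesis by (rule DERIV_cong) (simp add: algebra_simps)
  qed
  have qd: "exp t * (u' t + u t - c * (sinh t + cosh t)) \<ge> 0" if "t \<in> {0..l}" for t
  proof -
    have "0 \<le> p t" using pnn that .
    then have "u' t + u t - c * (sinh t + cosh t) \<ge> 0" unfolding p_def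
      by (simp add: zero_le_mult_iff)
    then show ?thesis by simp
  qed
  have q0: "q 0 = 0" unfolding q_def c_def by simp
  have ucosh: "u t \<ge> c * cosh t" if "t \<in> {0..l}" for t
  proof -
    have "q 0 \<le> q t" by (rule mono_within[OF hq]) (use qd that in auto)
    then have "q t \<ge> 0" using q0 by simp
    then show ?thesis unfolding q_def by (simp add: zero_le_mult_iff)
  qed
  have key: "f (x0 + t) + f (x0 - t) - 2 * a * cosh (t / sqrt 2) \<ge> 0" if "t \<in> {0..l}" for t
  proof -
    have "t * 1 \<le> t * sqrt 2" using that by (intro mult_left_mono) auto
    then have "cosh (t / sqrt 2) \<le> cosh t"
      using that by (subst cosh_real_nonneg_le_iff) (auto simp: divide_le_eq)
    moreover have "2*a*cosh t \<le> c * cosh t" using c2a by (intro mult_right_mono) auto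
    ultimately show ?thesis using ucosh[OF that] a_pos unfolding u_def
      by (smt (verit) mult_left_mono)
  qed
  define F where "F x = integral {-2*l..x} f" for x
  have hF: "(F has_real_derivative f x) (at x within ?I)" if "x \<in> ?I" for x
    unfolding F_def by (rule integral_has_real_derivative[OF cf that])
  define K where "K t = F (x0 + t) - F (x0 - t) - 2 * sqrt 2 * a * sinh (t / sqrt 2)" for t
  have hK: "(K has_real_derivative f (x0 + t) + f (x0 - t) - 2 * a * cosh (t / sqrt 2)) (at t within {0..l})"
    if "t \<in> {0..l}" for t
  proof -
    have dK: "((\<lambda>t. F (x0 + t) - F (x0 - t) - 2 * sqrt 2 * a * sinh (t / sqrt 2)) has_real_derivative
       (f (x0 + t) - - f (x0 - t) - 2 * sqrt 2 * a * (cosh (t / sqrt 2) * (1 / sqrt 2)))) (at t within {0..l})"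
      by (rule DERIV_diff[OF DERIV_diff[OF shift_p[OF hF subp that] shift_m[OF hF subm that]]
          DERIV_cmult[OF has_field_derivative_sinh[OF DERIV_cdivide[OF DERIV_ident]]]])
    have eq: "2 * sqrt 2 * a * (cosh (t / sqrt 2) * (1 / sqrt 2)) = 2 * a * cosh (t / sqrt 2)"
      by (simp add: field_simps)
    show ?thesis unfolding K_def[abs_def] by (rule DERIV_cong[OF dK]) (use eq in linarith)
  qed
  have "K 0 \<le> K l" by (rule mono_within[OF hK]) (use key l_pos in auto)
  then have Kl: "F (x0 + l) - F (x0 - l) \<ge> 2 * sqrt 2 * a * sinh (l / sqrt 2)"
    unfolding K_def by simp
  have Fm: "F x \<le> F y" if "-2*l \<le> x" "x \<le> y" "y \<le> 2*l" for x y
    by (rule mono_within[OF hF]) (use nonneg that in auto)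
  have "F (-2*l) = 0" unfolding F_def by simp
  then have "F (x0 - l) \<ge> 0" using Fm[of "-2*l" "x0-l"] x0 by auto
  moreover have "F (x0 + l) \<le> F (2*l)" using Fm[of "x0+l" "2*l"] x0 by auto
  ultimately show ?thesis using Kl unfolding F_def by linarith
qed

end
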